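(* The genus $g$ partition function $Z_V^{(g)}$ satisfies $\mathcal L_rZ_V^{(g)}=0$ for $r=-1,0,1$, where \begin{align*} \mathcal L_{-1}&=-\sum_{a\in\mathcal I}\partial_{w_a},\qquad \mathcal L_0=-\sum_{a\in\mathcal I}w_a\partial_{w_a}-2\sum_{a\in\mathcal I_+}\rho_a\partial_{\rho_a},\\ \mathcal L_1&=-\sum_{a\in\mathcal I}(w_a^2+\rho_{|a|})\partial_{w_a}-2\sum_{a\in\mathcal I_+}(w_a+w_{-a})\rho_a\partial_{\rho_a}. \end{align*}
   Context: $V=\bigoplus_{n\ge0}V_n$ is a simple, self-dual vertex operator algebra of strong CFT type ($V_0=\mathbb C\mathbb1$, $L(1)V_1=0$) with Virasoro modes $L(n)$ and $\mathrm{wt}(v)=n$ for $v\in V_n$. $\langle\cdot,\cdot\rangle_1$ is the unique invariant bilinear form with $\langle\mathbb1,\mathbb1\rangle_1=1$. Genus zero $n$-point function: $Z^{(0)}(v_1,y_1;\dots;v_n,y_n)=\langle\mathbb1,Y(v_1,y_1)\cdots Y(v_n,y_n)\mathbb1\rangle_1$. Let $g\ge1$, $\mathcal I=\{\pm1,\dots,\pm g\}$, $\mathcal I_+=\{1,\dots,g\}$, formal variables $w_a$ ($a\in\mathcal I$), $\rho_a$ ($a\in\mathcal I_+$). For each $a\in\mathcal I_+$ let $b_a$ run over a homogeneous basis of $V$, $\bar b_a$ the dual basis for $\langle\cdot,\cdot\rangle_1$, and $b_{-a}=\rho_a^{\mathrm{wt}(b_a)}\bar b_a$. The genus $g$ formal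 $n$-point function is $Z_V^{(g)}(v_1,y_1;\dots;v_n,y_n)=\sum_{b_1,\dots,b_g}Z^{(0)}(v_1,y_1;\dots;v_n,y_n;b_{-1},w_{-1};b_1,w_1;\dots;b_{-g},w_{-g};b_g,w_g)$ (formal power series in the $\rho_a$), and the partition function $Z_V^{(g)}$ is the case $n=0$. *)

theory Defs
  imports Complex_Main "HOL-Library.FuncSet"
begin

(* A vertex operator algebra is modelled on a type 'v with a complex scalar
   multiplication sm :: complex => 'v => 'v.  The vertex operator is given by
   its modes:  Y u n v = u_n v, i.e.  Y(u,z) = sum_n u_n z^(-n-1). *)

type_synonym 'v vmodes = "'v \<Rightarrow> int \<Rightarrow> 'v \<Rightarrow> 'v"

definition Lv :: "'v vmodes \<Rightarrow> 'v \<Rightarrow> int \<Rightarrow> 'v \<Rightarrow> 'v" where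
  "Lv Y om m = Y om (m + 1)"

definition wt_space :: "(complex \<Rightarrow> 'v \<Rightarrow> 'v) \<Rightarrow> 'v vmodes \<Rightarrow> 'v \<Rightarrow> nat \<Rightarrow> 'v set" where
  "wt_space sm Y om n = {v. Lv Y om 0 v = sm (of_nat n) v}"

definition sign_int :: "int \<Rightarrow> complex" where
  "sign_int r = (if even r then 1 else -1)"

(* Vertex operator algebra (Frenkel-Lepowsky-Meurman), Jacobi identity in
   Borcherds mode form, with V = (+)_{n>=0} V_n, dim V_n finite. *)
definition is_VOA :: "(complex \<Rightarrow> 'v::ab_group_add \<Rightarrow> 'v) \<Rightarrow> 'v vmodes \<Rightarrow> 'v \<Rightarrow> 'v \<Rightarrow> bool" where
  "is_VOA sm Y vac om \<longleftrightarrow>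
     vector_space sm
   \<and> (\<forall>u n. Vector_Spaces.linear sm sm (Y u n))
   \<and> (\<forall>n v. Vector_Spaces.linear sm sm (\<lambda>u. Y u n v))
   \<and> (\<forall>u v. \<exists>N. \<forall>n\<ge>N. Y u n v = 0)
   \<and> (\<forall>n v. Y vac n v = (if n = -1 then v else 0))
   \<and> (\<forall>u n. 0 \<le> n \<longrightarrow> Y u n vac = 0)
   \<and> (\<forall>u. Y u (-1) vac = u)
   \<and> (\<forall>u v w p q r. \<exists>N. \<forall>M\<ge>N.
        (\<Sum>i<M. sm ((of_int p :: complex) gchoose i) (Y (Y u (r + int i) v) (p + q - int i) w))
      = (\<Sum>i<M. sm ((-1) ^ i * ((of_int r :: complex) gchoose i))
            (Y u (p + r - int i) (Y v (q + int i) w)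
             - sm (sign_int r) (Y v (q + r - int i) (Y u (p + int i) w)))))
   \<and> (\<exists>c::complex. \<forall>m n v.
        Lv Y om m (Lv Y om n v) - Lv Y om n (Lv Y om m v)
      = sm (of_int (m - n)) (Lv Y om (m + n) v)
        + (if m + n = 0 then sm ((of_int m ^ 3 - of_int m) / 12 * c) v else 0))
   \<and> (\<forall>u n v. Y (Lv Y om (-1) u) n v = sm (- of_int n) (Y u (n - 1) v))
   \<and> (\<forall>v. \<exists>f N. (\<forall>n. f n \<in> wt_space sm Y om n) \<and> v = (\<Sum>n<N. f n))
   \<and> (\<forall>n. \<exists>S. finite S \<and> wt_space sm Y om n = module.span sm S)"

definition strong_CFT_type :: "(complex \<Rightarrow> 'v::ab_group_add \<Rightarrow> 'v) \<Rightarrow> 'v vmodes \<Rightarrow> 'v \<Rightarrow> 'v \<Rightarrow> bool" where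
  "strong_CFT_type sm Y vac om \<longleftrightarrow>
     wt_space sm Y om 0 = module.span sm {vac}
   \<and> (\<forall>v \<in> wt_space sm Y om 1. Lv Y om 1 v = 0)"

definition simple_VOA :: "(complex \<Rightarrow> 'v::ab_group_add \<Rightarrow> 'v) \<Rightarrow> 'v vmodes \<Rightarrow> bool" where
  "simple_VOA sm Y \<longleftrightarrow>
     (\<forall>I. module.subspace sm I \<and> (\<forall>u n w. w \<in> I \<longrightarrow> Y u n w \<in> I) \<longrightarrow> I = {0} \<or> I = UNIV)"

(* invariant bilinear form (FLM):
   <Y(u,z)v,w> = <v, Y(e^{zL(1)}(-z^{-2})^{L(0)} u, z^{-1}) w>, in modes for u in V_k:
   <u_n v, w> = (-1)^k sum_j 1/j! <v, (L(1)^j u)_{2k-n-j-2} w> *)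
definition invariant_form :: "(complex \<Rightarrow> 'v::ab_group_add \<Rightarrow> 'v) \<Rightarrow> 'v vmodes \<Rightarrow> 'v \<Rightarrow> ('v \<Rightarrow> 'v \<Rightarrow> complex) \<Rightarrow> bool" where
  "invariant_form sm Y om B \<longleftrightarrow>
     (\<forall>u. Vector_Spaces.linear sm (*) (B u))
   \<and> (\<forall>w. Vector_Spaces.linear sm (*) (\<lambda>u. B u w))
   \<and> (\<forall>k u n v w. u \<in> wt_space sm Y om k \<longrightarrow>
        B (Y u n v) w = (-1) ^ k * (\<Sum>j\<le>k. (1 / fact j) *
            B v (Y ((Lv Y om 1 ^^ j) u) (2 * int k - n - int j - 2) w)))"

(* self-dual: V is isomorphic to its contragredient, i.e. V carries a
   nondegenerate invariant bilinear form *)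
definition self_dual :: "(complex \<Rightarrow> 'v::ab_group_add \<Rightarrow> 'v) \<Rightarrow> 'v vmodes \<Rightarrow> 'v \<Rightarrow> bool" where
  "self_dual sm Y om \<longleftrightarrow>
     (\<exists>B. invariant_form sm Y om B
        \<and> (\<forall>v. (\<forall>w. B v w = 0) \<longrightarrow> v = 0)
        \<and> (\<forall>w. (\<forall>v. B v w = 0) \<longrightarrow> w = 0))"

definition Iset :: "nat \<Rightarrow> int set" where
  "Iset g = {a. a \<noteq> 0 \<and> \<bar>a\<bar> \<le> int g}"

(* Formal series in rho_1..rho_g and w_a (a in I) are represented by their
   coefficient functions F k m = coefficient of prod_a rho_a^(k a) * prod_a w_a^(m a),
   with k :: nat => nat (supported in {1..g}) and m :: int => int (supported in I).

   Genus g partition function, n = 0: coefficient of rho^k w^m is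
   sum over b_a in basis of V_{k a} of the coefficient of prod w_a^(m a) in
   <1, Y(bbar_1,w_{-1}) Y(b_1,w_1) ... Y(bbar_g,w_{-g}) Y(b_g,w_g) 1>,
   where Y(u,w) = sum_n u_n w^(-n-1). *)
definition genus_Z ::
  "('v \<Rightarrow> int \<Rightarrow> 'v \<Rightarrow> 'v) \<Rightarrow> 'v \<Rightarrow> ('v \<Rightarrow> 'v \<Rightarrow> complex) \<Rightarrow> (nat \<Rightarrow> 'v set) \<Rightarrow> ('v \<Rightarrow> 'v)
   \<Rightarrow> nat \<Rightarrow> (nat \<Rightarrow> nat) \<Rightarrow> (int \<Rightarrow> int) \<Rightarrow> complex" where
  "genus_Z Y vac B basis dual g k m =
     (if (\<forall>a. a \<notin> {1..g} \<longrightarrow> k a = 0) \<and> (\<forall>a. a \<notin> Iset g \<longrightarrow> m a = 0) then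
        (\<Sum>\<beta>\<in>Pi\<^sub>E {1..g} (\<lambda>a. basis (k a)).
           B vac (foldr (\<lambda>a x. Y (dual (\<beta> a)) (- m (- int a) - 1) (Y (\<beta> a) (- m (int a) - 1) x))
                    [1..<g+1] vac))
      else 0)"

definition L_m1 :: "nat \<Rightarrow> ((nat \<Rightarrow> nat) \<Rightarrow> (int \<Rightarrow> int) \<Rightarrow> complex) \<Rightarrow> (nat \<Rightarrow> nat) \<Rightarrow> (int \<Rightarrow> int) \<Rightarrow> complex" where
  "L_m1 g F k m = - (\<Sum>a\<in>Iset g. of_int (m a + 1) * F k (m(a := m a + 1)))"

definition L_0 :: "nat \<Rightarrow> ((nat \<Rightarrow> nat) \<Rightarrow> (int \<Rightarrow> int) \<Rightarrow> complex) \<Rightarrow> (nat \<Rightarrow> nat) \<Rightarrow> (int \<Rightarrow> int) \<Rightarrow> complex" where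
  "L_0 g F k m = - (\<Sum>a\<in>Iset g. of_int (m a) * F k m) - 2 * (\<Sum>a\<in>{1..g}. of_nat (k a) * F k m)"

definition L_1 :: "nat \<Rightarrow> ((nat \<Rightarrow> nat) \<Rightarrow> (int \<Rightarrow> int) \<Rightarrow> complex) \<Rightarrow> (nat \<Rightarrow> nat) \<Rightarrow> (int \<Rightarrow> int) \<Rightarrow> complex" where
  "L_1 g F k m =
     - (\<Sum>a\<in>Iset g.
          of_int (m a - 1) * F k (m(a := m a - 1))
        + (if 1 \<le> k (nat \<bar>a\<bar>)
           then of_int (m a + 1) * F (k(nat \<bar>a\<bar> := k (nat \<bar>a\<bar>) - 1)) (m(a := m a + 1))
           else 0))
     - 2 * (\<Sum>a\<in>{1..g}. of_nat (k a) *
          (F k (m(int a := m (int a) - 1)) + F k (m(- int a := m (- int a) - 1))))"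

end

theory Submission imports Defs "HOL-Library.FuncSet" begin

lemma lin_add: "Vector_Spaces.linear s1 s2 f \<Longrightarrow> f (x + y) = f x + f y"
  using module_hom.add module_hom_iff_linear by metis
lemma lin_scale: "Vector_Spaces.linear s1 s2 f \<Longrightarrow> f (s1 c x) = s2 c (f x)"
  using module_hom.scale module_hom_iff_linear by metis
lemma lin_zero: "Vector_Spaces.linear s1 s2 f \<Longrightarrow> f 0 = 0"
  using module_hom.zero module_hom_iff_linear by metis
lemma lin_diff: "Vector_Spaces.linear s1 s2 f \<Longrightarrow> f (x - y) = f x - f y"
  using module_hom.diff module_hom_iff_linear by metis
lemma lin_sum: "Vector_Spaces.linear s1 s2 f \<Longrightarrow> f (sum g A) = (\<Sum>a\<in>A. f (g a))"
  using module_hom.sum module_hom_iff_linear by metis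

lemma sum_PiE_split:
  assumes "x \<notin> S"
  shows "(\<Sum>\<beta>\<in>Pi\<^sub>E (insert x S) T. G \<beta>) = (\<Sum>y\<in>T x. \<Sum>\<beta>\<in>Pi\<^sub>E S T. G (\<beta>(x:=y)))"
  apply (simp add: PiE_insert_eq)
  apply (subst sum.reindex, rule inj_combinator[OF assms])
  apply (simp add: sum.cartesian_product split_def)
  done

primrec act :: "('v \<Rightarrow> int \<Rightarrow> 'v \<Rightarrow> 'v) \<Rightarrow> int list \<Rightarrow> (int \<Rightarrow> 'v) \<Rightarrow> (int \<Rightarrow> int) \<Rightarrow> 'v \<Rightarrow> 'v" where
  "act Y [] V M x = x"
| "act Y (j # js) V M x = Y (V j) (M j) (act Y js V M x)"

lemma act_cong: "(\<And>j. j \<in> set js \<Longrightarrow> V j = V' j \<and> M j = M' j) \<Longrightarrow> act Y js V M x = act Y js V' M' x"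
  by (induct js) auto

definition jsl :: "nat \<Rightarrow> int list" where
  "jsl g = concat (map (\<lambda>a. [- int a, int a]) [1..<g+1])"

definition Vb :: "('v \<Rightarrow> 'v) \<Rightarrow> (nat \<Rightarrow> 'v) \<Rightarrow> int \<Rightarrow> 'v" where
  "Vb dual \<beta> j = (if j < 0 then dual (\<beta> (nat (- j))) else \<beta> (nat j))"

definition Mm :: "(int \<Rightarrow> int) \<Rightarrow> int \<Rightarrow> int" where
  "Mm m j = - m j - 1"

lemma Iset_eq: "Iset g = int ` {1..g} \<union> (\<lambda>a. - int a) ` {1..g}"
proof (rule set_eqI)
  fix x :: int
  show "x \<in> Iset g \<longleftrightarrow> x \<in> int ` {1..g} \<union> (\<lambda>a. - int a) ` {1..g}"
  proof
    assume x: "x \<in> Iset g"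
    show "x \<in> int ` {1..g} \<union> (\<lambda>a. - int a) ` {1..g}"
    proof (cases "x > 0")
      case True
      then have "x \<in> int ` {1..g}" using x by (intro image_eqI[of _ _ "nat x"]) (auto simp: Iset_def)
      then show ?thesis by blast
    next
      case False
      then have "x \<in> (\<lambda>a. - int a) ` {1..g}" using x by (intro image_eqI[of _ _ "nat (- x)"]) (auto simp: Iset_def)
      then show ?thesis by blast
    qed
  qed (auto simp: Iset_def)
qed

lemma set_jsl: "set (jsl g) = Iset g"
  unfolding Iset_eq jsl_def by auto

lemma distinct_jsl: "distinct (jsl g)"
proof -
  have "distinct (concat (map (\<lambda>a. [- int a, int a]) [Suc 0..<Suc g]))" for g
  proof (induct g)
    case 0 then show ?case by simp
  next
    case (Suc g)
    have "distinct (concat (map (\<lambda>a. [- int a, int a]) [Suc 0..<Suc g]) @ [- int (Suc g), int (Suc g)])"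
      using Suc by (auto simp: distinct_append)
    then show ?case by simp
  qed
  then show ?thesis unfolding jsl_def by simp
qed

lemma foldr_act: "(\<forall>a\<in>set as. 1 \<le> a) \<Longrightarrow>
  foldr (\<lambda>a x. Y (dual (\<beta> a)) (- m (- int a) - 1) (Y (\<beta> a) (- m (int a) - 1) x)) as x
  = act Y (concat (map (\<lambda>a. [- int a, int a]) as)) (Vb dual \<beta>) (Mm m) x"
  by (induct as) (auto simp: Vb_def Mm_def)

lemma sum_Iset: "(\<Sum>j\<in>Iset g. f j) = (\<Sum>a\<in>{1..g}. f (int a) + f (- int a))"
proof -
  note e = Iset_eq
  have "(\<Sum>j\<in>Iset g. f j) = (\<Sum>j\<in>int ` {1..g}. f j) + (\<Sum>j\<in>(\<lambda>a. - int a) ` {1..g}. f j)"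
    unfolding e by (rule sum.union_disjoint) auto
  also have "\<dots> = (\<Sum>a\<in>{1..g}. f (int a)) + (\<Sum>a\<in>{1..g}. f (- int a))"
    by (simp add: sum.reindex inj_on_def)
  finally show ?thesis by (simp add: sum.distrib)
qed

definition supp :: "nat \<Rightarrow> (nat \<Rightarrow> nat) \<Rightarrow> (int \<Rightarrow> int) \<Rightarrow> bool" where
  "supp g k m \<longleftrightarrow> (\<forall>a. a \<notin> {1..g} \<longrightarrow> k a = 0) \<and> (\<forall>a. a \<notin> Iset g \<longrightarrow> m a = 0)"

lemma supp_m: "a \<in> Iset g \<Longrightarrow> supp g k (m(a := x)) = supp g k m"
  unfolding supp_def by auto

lemma supp_k: "a \<in> {1..g} \<Longrightarrow> supp g (k(a := y)) m = supp g k m"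
  unfolding supp_def by auto

lemma Mm_upd: "Mm (m(a := x)) = (Mm m)(a := - x - 1)"
  by (auto simp: Mm_def)

lemma genus_eq: "supp g k m \<Longrightarrow> genus_Z Y vac B basis dual g k m
  = (\<Sum>\<beta>\<in>Pi\<^sub>E {1..g} (\<lambda>a. basis (k a)). B vac (act Y (jsl g) (Vb dual \<beta>) (Mm m) vac))"
proof -
  assume h: "supp g k m"
  have cond: "(\<forall>a. a \<notin> {1..g} \<longrightarrow> k a = 0) \<and> (\<forall>a. a \<notin> Iset g \<longrightarrow> m a = 0)"
    using h by (simp add: supp_def)
  have "\<forall>a\<in>set [1..<g+1]. 1 \<le> a" by (simp del: upt_Suc)
  then show ?thesis by (simp only: genus_Z_def if_P[OF cond] foldr_act jsl_def)
qed

lemma genus_ns: "\<not> supp g k m \<Longrightarrow> genus_Z Y vac B basis dual g k m = 0"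
  unfolding genus_Z_def by (rule if_not_P) (simp add: supp_def)

lemma supp_kI: "a \<in> Iset g \<Longrightarrow> supp g (k(nat \<bar>a\<bar> := y)) m = supp g k m"
  by (rule supp_k) (auto simp: Iset_def)
lemma supp_mp: "a \<in> {1..g} \<Longrightarrow> supp g k (m(int a := x)) = supp g k m"
  by (rule supp_m) (auto simp: Iset_def)
lemma supp_mn: "a \<in> {1..g} \<Longrightarrow> supp g k (m(- int a := x)) = supp g k m"
  by (rule supp_m) (auto simp: Iset_def)

locale VC = vector_space sm for sm :: "complex \<Rightarrow> 'v::ab_group_add \<Rightarrow> 'v" +
  fixes Y :: "'v \<Rightarrow> int \<Rightarrow> 'v \<Rightarrow> 'v" and vac om :: 'v and B :: "'v \<Rightarrow> 'v \<Rightarrow> complex"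
    and basis :: "nat \<Rightarrow> 'v set" and dual :: "'v \<Rightarrow> 'v"
  assumes Ylin: "\<And>u n. Vector_Spaces.linear sm sm (Y u n)"
    and Ylin1: "\<And>n v. Vector_Spaces.linear sm sm (\<lambda>u. Y u n v)"
    and crea: "\<And>u n. 0 \<le> n \<Longrightarrow> Y u n vac = 0"
    and crea1: "\<And>u. Y u (-1) vac = u"
    and jac: "\<And>u v w p q r. \<exists>N. \<forall>M\<ge>N.
        (\<Sum>i<M. sm ((of_int p :: complex) gchoose i) (Y (Y u (r + int i) v) (p + q - int i) w))
      = (\<Sum>i<M. sm ((-1) ^ i * ((of_int r :: complex) gchoose i))
            (Y u (p + r - int i) (Y v (q + int i) w)
             - sm (sign_int r) (Y v (q + r - int i) (Y u (p + int i) w))))"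
    and vir: "\<exists>c::complex. \<forall>m n v.
        Lv Y om m (Lv Y om n v) - Lv Y om n (Lv Y om m v)
      = sm (of_int (m - n)) (Lv Y om (m + n) v)
        + (if m + n = 0 then sm ((of_int m ^ 3 - of_int m) / 12 * c) v else 0)"
    and der: "\<And>u n v. Y (Lv Y om (-1) u) n v = sm (- of_int n) (Y u (n - 1) v)"
    and grad: "\<And>v. \<exists>f N. (\<forall>n. f n \<in> wt_space sm Y om n) \<and> v = (\<Sum>n<N. f n)"
    and simple: "simple_VOA sm Y"
    and V0: "wt_space sm Y om 0 = span {vac}"
    and Blin: "\<And>u. Vector_Spaces.linear sm (*) (B u)"
    and Blin1: "\<And>w. Vector_Spaces.linear sm (*) (\<lambda>u. B u w)"
    and Binv: "\<And>k u n v w. u \<in> wt_space sm Y om k \<Longrightarrow>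
        B (Y u n v) w = (-1) ^ k * (\<Sum>j\<le>k. (1 / fact j) *
            B v (Y ((Lv Y om 1 ^^ j) u) (2 * int k - n - int j - 2) w))"
    and Bvac: "B vac vac = 1"
    and bas: "\<And>n. finite (basis n) \<and> basis n \<subseteq> wt_space sm Y om n
            \<and> span (basis n) = wt_space sm Y om n"
    and dualp: "\<And>n b b'. b \<in> basis n \<Longrightarrow> b' \<in> basis n \<Longrightarrow>
            dual b \<in> wt_space sm Y om n \<and> B (dual b) b' = (if b = b' then 1 else 0)"
begin

abbreviation "L n \<equiv> Y om (n + 1)"
abbreviation "W n \<equiv> wt_space sm Y om n"

lemma Yadd: "Y u n (x + y) = Y u n x + Y u n y" using lin_add[OF Ylin] .
lemma Yscale: "Y u n (sm c x) = sm c (Y u n x)" using lin_scale[OF Ylin] .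
lemma Yzero[simp]: "Y u n 0 = 0" using lin_zero[OF Ylin] .
lemma Ydiff: "Y u n (x - y) = Y u n x - Y u n y" using lin_diff[OF Ylin] .
lemma Yneg: "Y u n (- x) = - Y u n x" by (metis Ydiff Yzero diff_0)
lemma Ysum: "Y u n (sum g A) = (\<Sum>a\<in>A. Y u n (g a))" using lin_sum[OF Ylin] .
lemma Y1add: "Y (x + y) n v = Y x n v + Y y n v" using lin_add[OF Ylin1[of n v]] by simp
lemma Y1scale: "Y (sm c x) n v = sm c (Y x n v)" using lin_scale[OF Ylin1[of n v]] by simp
lemma Y1zero[simp]: "Y 0 n v = 0" using lin_zero[OF Ylin1[of n v]] by simp
lemma Y1sum: "Y (sum g A) n v = (\<Sum>a\<in>A. Y (g a) n v)" using lin_sum[OF Ylin1[of n v]] by simp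
lemma Badd: "B u (x + y) = B u x + B u y" using lin_add[OF Blin] .
lemma Bscale: "B u (sm c x) = c * B u x" using lin_scale[OF Blin] .
lemma Bzero[simp]: "B u 0 = 0" using lin_zero[OF Blin] .
lemma Bdiff: "B u (x - y) = B u x - B u y" using lin_diff[OF Blin] .
lemma Bneg: "B u (- x) = - B u x" by (metis Bdiff Bzero diff_0)
lemma Bsum: "B u (sum g A) = (\<Sum>a\<in>A. B u (g a))" using lin_sum[OF Blin] .
lemma B1add: "B (x + y) v = B x v + B y v" using lin_add[OF Blin1[of v]] by simp
lemma B1scale: "B (sm c x) v = c * B x v" using lin_scale[OF Blin1[of v]] by simp
lemma B1zero[simp]: "B 0 v = 0" using lin_zero[OF Blin1[of v]] by simp
lemma B1diff: "B (x - y) v = B x v - B y v" using lin_diff[OF Blin1[of v]] by simp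
lemma B1sum: "B (sum g A) v = (\<Sum>a\<in>A. B (g a) v)" using lin_sum[OF Blin1[of v]] by simp

lemma comm_gen: "Y om (int P) (Y u n y) - Y u n (Y om (int P) y)
   = (\<Sum>i\<le>P. sm (of_nat (P choose i)) (Y (Y om (int i) u) (int P + n - int i) y))"
proof -
  obtain N where hN: "\<forall>M\<ge>N. (\<Sum>i<M. sm ((of_int (int P) :: complex) gchoose i) (Y (Y om (0 + int i) u) (int P + n - int i) y))
      = (\<Sum>i<M. sm ((-1) ^ i * ((of_int 0 :: complex) gchoose i))
            (Y om (int P + 0 - int i) (Y u (n + int i) y)
             - sm (sign_int 0) (Y u (n + 0 - int i) (Y om (int P + int i) y))))"
    using jac[where u=om and v=u and w=y and p="int P" and q=n and r=0] by blast
  define M where "M = max N (Suc P)"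
  have MN: "M \<ge> N" and MP: "P < M" unfolding M_def by auto
  have 1: "(\<Sum>i<M. sm ((of_int (int P) :: complex) gchoose i) (Y (Y om (0 + int i) u) (int P + n - int i) y))
     = (\<Sum>i\<le>P. sm (of_nat (P choose i)) (Y (Y om (int i) u) (int P + n - int i) y))"
  proof -
    have "(\<Sum>i<M. sm ((of_int (int P) :: complex) gchoose i) (Y (Y om (0 + int i) u) (int P + n - int i) y))
       = (\<Sum>i<M. sm (of_nat (P choose i)) (Y (Y om (int i) u) (int P + n - int i) y))"
      by (simp add: binomial_gbinomial)
    also have "\<dots> = (\<Sum>i\<le>P. sm (of_nat (P choose i)) (Y (Y om (int i) u) (int P + n - int i) y))"
      by (rule sum.mono_neutral_right) (use MP in auto)
    finally show ?thesis .
  qed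
  have 2: "(\<Sum>i<M. sm ((-1) ^ i * ((of_int 0 :: complex) gchoose i))
            (Y om (int P + 0 - int i) (Y u (n + int i) y)
             - sm (sign_int 0) (Y u (n + 0 - int i) (Y om (int P + int i) y))))
      = Y om (int P) (Y u n y) - Y u n (Y om (int P) y)"
  proof -
    have "(\<Sum>i<M. sm ((-1) ^ i * ((of_int 0 :: complex) gchoose i))
            (Y om (int P + 0 - int i) (Y u (n + int i) y)
             - sm (sign_int 0) (Y u (n + 0 - int i) (Y om (int P + int i) y))))
       = (\<Sum>i\<in>{0}. sm ((-1) ^ i * ((of_int 0 :: complex) gchoose i))
            (Y om (int P + 0 - int i) (Y u (n + int i) y)
             - sm (sign_int 0) (Y u (n + 0 - int i) (Y om (int P + int i) y))))"
      by (rule sum.mono_neutral_right) (use MP in \<open>auto simp: gbinomial_0_left\<close>)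
    then show ?thesis by (simp add: sign_int_def)
  qed
  show ?thesis using hN[rule_format, OF MN] 1 2 by simp
qed

lemma comm_Lm1: "Y om 0 (Y u n y) - Y u n (Y om 0 y) = sm (- of_int n) (Y u (n - 1) y)"
  using comm_gen[of 0 u n y] der[of u n y] by (simp add: Lv_def)

lemma comm_L0: "u \<in> W K \<Longrightarrow> Y om 1 (Y u n y) - Y u n (Y om 1 y) = sm (of_nat K - of_int n - 1) (Y u n y)"
  using comm_gen[of 1 u n y] der[of u "n+1" y]
  by (simp add: Lv_def wt_space_def Y1scale algebra_simps)

lemma comm_L1: "u \<in> W K \<Longrightarrow> Y om 2 (Y u n y) - Y u n (Y om 2 y)
    = sm (2 * of_nat K - of_int n - 2) (Y u (n + 1) y) + Y (Y om 2 u) n y"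
proof -
  assume u: "u \<in> W K"
  have "Y om (int 2) (Y u n y) - Y u n (Y om (int 2) y)
   = (\<Sum>i\<le>2. sm (of_nat (2 choose i)) (Y (Y om (int i) u) (int 2 + n - int i) y))"
    by (rule comm_gen)
  also have "\<dots> = Y (Y om 0 u) (n + 2) y + sm 2 (Y (Y om 1 u) (n+1) y) + Y (Y om 2 u) n y"
    by (simp add: numeral_2_eq_2 atMost_Suc algebra_simps)
  also have "\<dots> = sm (2 * of_nat K - of_int n - 2) (Y u (n + 1) y) + Y (Y om 2 u) n y"
    using der[of u "n+2" y] u by (simp add: Lv_def wt_space_def Y1scale algebra_simps)
  finally show ?thesis by simp
qed

lemma virL: "\<exists>c. \<forall>m n v. Y om (m+1) (Y om (n+1) v) - Y om (n+1) (Y om (m+1) v)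
      = sm (of_int (m - n)) (Y om (m + n + 1) v)
        + (if m + n = 0 then sm ((of_int m ^ 3 - of_int m) / 12 * c) v else 0)"
proof -
  from vir obtain c where "\<forall>m n v. Lv Y om m (Lv Y om n v) - Lv Y om n (Lv Y om m v)
      = sm (of_int (m - n)) (Lv Y om (m + n) v)
        + (if m + n = 0 then sm ((of_int m ^ 3 - of_int m) / 12 * c) v else 0)" by blast
  then show ?thesis by (intro exI[of _ c]) (simp add: Lv_def add.assoc)
qed

lemma vac_modes: "Y om 0 vac = 0" "Y om 1 vac = 0" "Y om 2 vac = 0"
  by (auto intro: crea)

lemma om_wt: "Y om 1 om = sm 2 om"
proof -
  from virL obtain c where h0: "\<forall>m n v. Y om (m+1) (Y om (n+1) v) - Y om (n+1) (Y om (m+1) v)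
      = sm (of_int (m - n)) (Y om (m + n + 1) v)
        + (if m + n = 0 then sm ((of_int m ^ 3 - of_int m) / 12 * c) v else 0)" by blast
  note h = h0[rule_format]
  from h[of 0 "-2" vac] show ?thesis using crea1[of om] vac_modes by simp
qed

lemma om_L1: "Y om 2 om = 0"
proof -
  from virL obtain c where h0: "\<forall>m n v. Y om (m+1) (Y om (n+1) v) - Y om (n+1) (Y om (m+1) v)
      = sm (of_int (m - n)) (Y om (m + n + 1) v)
        + (if m + n = 0 then sm ((of_int m ^ 3 - of_int m) / 12 * c) v else 0)" by blast
  note h = h0[rule_format]
  from h[of 1 "-2" vac] show ?thesis using crea1[of om] vac_modes by simp
qed

lemma om_W2: "om \<in> W 2"
  using om_wt by (simp add: wt_space_def Lv_def)

lemma L1_wt: "v \<in> W (Suc K) \<Longrightarrow> Y om 2 v \<in> W K"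
proof -
  assume v: "v \<in> W (Suc K)"
  from virL obtain c where h0: "\<forall>m n v. Y om (m+1) (Y om (n+1) v) - Y om (n+1) (Y om (m+1) v)
      = sm (of_int (m - n)) (Y om (m + n + 1) v)
        + (if m + n = 0 then sm ((of_int m ^ 3 - of_int m) / 12 * c) v else 0)" by blast
  note h = h0[rule_format]
  from h[of 0 1 v] have "Y om 1 (Y om 2 v) = Y om 2 (Y om 1 v) - Y om 2 v"
    by (simp add: algebra_simps)
  also have "\<dots> = sm (of_nat K) (Y om 2 v)"
    using v by (simp add: wt_space_def Lv_def Yscale Yadd algebra_simps)
  finally show ?thesis by (simp add: wt_space_def Lv_def)
qed

lemma Lm1_wt: "v \<in> W K \<Longrightarrow> Y om 0 v \<in> W (Suc K)"
proof -
  assume v: "v \<in> W K"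
  from virL obtain c where h0: "\<forall>m n v. Y om (m+1) (Y om (n+1) v) - Y om (n+1) (Y om (m+1) v)
      = sm (of_int (m - n)) (Y om (m + n + 1) v)
        + (if m + n = 0 then sm ((of_int m ^ 3 - of_int m) / 12 * c) v else 0)" by blast
  note h = h0[rule_format]
  from h[of 0 "-1" v] have "Y om 1 (Y om 0 v) = Y om 0 (Y om 1 v) + Y om 0 v"
    by (simp add: algebra_simps)
  also have "\<dots> = sm (of_nat (Suc K)) (Y om 0 v)"
    using v by (simp add: wt_space_def Lv_def Yscale algebra_simps)
  finally show ?thesis by (simp add: wt_space_def Lv_def)
qed

lemma L1_W0: "v \<in> W 0 \<Longrightarrow> Y om 2 v = 0"
  using V0 vac_modes by (auto simp: span_singleton Yscale)

lemma Binv_om: "B (Y om n v) w = B v (Y om (2 - n) w)"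
proof -
  have "B (Y om n v) w = (-1) ^ 2 * (\<Sum>j\<le>2. (1 / fact j) *
            B v (Y ((Lv Y om 1 ^^ j) om) (2 * int 2 - n - int j - 2) w))"
    by (rule Binv[OF om_W2])
  also have "\<dots> = B v (Y om (2 - n) w)"
    by (simp add: numeral_2_eq_2 atMost_Suc Lv_def om_L1)
  finally show ?thesis .
qed

lemma B_L0: "B (Y om 1 v) w = B v (Y om 1 w)" using Binv_om[of 1] by simp
lemma B_L1: "B (Y om 2 v) w = B v (Y om 0 w)" using Binv_om[of 2] by simp
lemma B_Lm1: "B (Y om 0 v) w = B v (Y om 2 w)" using Binv_om[of 0] by simp

lemma Bvac_O: "B vac (Y om 0 x) = 0" "B vac (Y om 1 x) = 0" "B vac (Y om 2 x) = 0"
  using B_L1[of vac x] B_L0[of vac x] B_Lm1[of vac x] vac_modes by simp_all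

lemma W_subspace: "subspace (W n)"
  by (rule subspaceI) (auto simp: wt_space_def Lv_def Yadd Yscale scale_left_commute scale_right_distrib)

lemma W_orth: "z \<in> W K \<Longrightarrow> w \<in> W n \<Longrightarrow> K \<noteq> n \<Longrightarrow> B z w = 0"
proof -
  assume z: "z \<in> W K" and w: "w \<in> W n" and Kn: "K \<noteq> n"
  have "of_nat K * B z w = of_nat n * B z w"
    using B_L0[of z w] z w by (simp add: wt_space_def Lv_def B1scale Bscale)
  then have "(of_nat K - of_nat n) * B z w = 0" by (simp add: algebra_simps)
  then show ?thesis using Kn by simp
qed

lemma radical_zero: "(\<And>w. B z w = 0) \<Longrightarrow> z = 0"
proof -
  assume zr: "\<And>w. B z w = 0"
  define R where "R = {z. \<forall>w. B z w = 0}"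
  have sub: "subspace R"
    by (rule subspaceI) (auto simp: R_def B1add B1scale)
  have cl: "\<forall>u n w. w \<in> R \<longrightarrow> Y u n w \<in> R"
  proof (intro allI impI)
    fix u n x assume x: "x \<in> R"
    obtain f N where f: "\<forall>n. f n \<in> W n" and u: "u = (\<Sum>n<N. f n)" using grad[of u] by blast
    show "Y u n x \<in> R"
      unfolding R_def
    proof (intro CollectI allI)
      fix w
      have "B (Y u n x) w = (\<Sum>k<N. B (Y (f k) n x) w)" by (simp add: u Y1sum B1sum)
      also have "\<dots> = 0"
      proof (rule sum.neutral, rule ballI)
        fix k
        show "B (Y (f k) n x) w = 0"
          using Binv[OF f[rule_format, of k], of n x w] x by (simp add: R_def)
      qed
      finally show "B (Y u n x) w = 0" .
    qed
  qed
  from simple sub cl have "R = {0} \<or> R = UNIV" unfolding simple_VOA_def by blast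
  moreover have "vac \<notin> R" using Bvac by (auto simp: R_def intro!: exI[of _ vac])
  moreover have "z \<in> R" using zr by (simp add: R_def)
  ultimately show ?thesis by auto
qed

lemma basis_exp: "y \<in> W K \<Longrightarrow> y = (\<Sum>b\<in>basis K. sm (B (dual b) y) b)"
proof -
  assume y: "y \<in> W K"
  have fin: "finite (basis K)" using bas by blast
  have "y \<in> range (\<lambda>u. \<Sum>b\<in>basis K. sm (u b) b)"
    using y bas[of K] span_finite[OF fin] by auto
  then obtain u where u: "y = (\<Sum>b\<in>basis K. sm (u b) b)" by blast
  have "\<And>b. b \<in> basis K \<Longrightarrow> B (dual b) y = u b"
  proof -
    fix b assume b: "b \<in> basis K"
    have "B (dual b) y = (\<Sum>b'\<in>basis K. u b' * B (dual b) b')" by (simp add: u Bsum Bscale)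
    also have "\<dots> = (\<Sum>b'\<in>basis K. if b' = b then u b' else 0)"
      by (rule sum.cong) (use dualp[OF b] in auto)
    also have "\<dots> = u b" using fin b by simp
    finally show "B (dual b) y = u b" .
  qed
  then show ?thesis using u by simp
qed

lemma dual_exp: "x \<in> W K \<Longrightarrow> x = (\<Sum>b\<in>basis K. sm (B x b) (dual b))"
proof -
  assume x: "x \<in> W K"
  have fin: "finite (basis K)" using bas by blast
  define z where "z = x - (\<Sum>b\<in>basis K. sm (B x b) (dual b))"
  have zW: "z \<in> W K" unfolding z_def
    by (intro subspace_diff[OF W_subspace] x subspace_sum[OF W_subspace] subspace_scale[OF W_subspace])
       (use dualp in blast)
  have zb: "B z b = 0" if b: "b \<in> basis K" for b
  proof -
    have "(\<Sum>b'\<in>basis K. B x b' * B (dual b') b) = (\<Sum>b'\<in>basis K. if b' = b then B x b' else 0)"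
      by (rule sum.cong) (use dualp b in auto)
    also have "\<dots> = B x b" using fin b by simp
    finally show ?thesis by (simp add: z_def B1diff B1sum B1scale)
  qed
  have "\<And>w. B z w = 0"
  proof -
    fix w
    obtain f N where f: "\<forall>n. f n \<in> W n" and w: "w = (\<Sum>n<N. f n)" using grad[of w] by blast
    have "B z (f n) = 0" for n
    proof (cases "n = K")
      case True
      have "f n \<in> range (\<lambda>u. \<Sum>b\<in>basis K. sm (u b) b)"
        using f bas[of K] True span_finite[OF fin] by auto
      then obtain u where u: "f n = (\<Sum>b\<in>basis K. sm (u b) b)" by blast
      show ?thesis by (simp add: u Bsum Bscale zb)
    next
      case False then show ?thesis using W_orth[OF zW f[rule_format, of n]] by simp
    qed
    then show "B z w = 0" by (simp add: w Bsum)
  qed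
  then have "z = 0" by (rule radical_zero)
  then show ?thesis by (simp add: z_def)
qed

lemma addsum:
  fixes f :: "'a::ab_group_add \<Rightarrow> 'b::ab_group_add"
  assumes h: "\<And>x x'. f (x + x') = f x + f x'"
  shows "f (sum g A) = (\<Sum>a\<in>A. f (g a))"
proof -
  have "f 0 + f 0 = f 0 + 0" using h[of 0 0] by simp
  then have z: "f 0 = 0" by (simp only: add_left_cancel)
  show ?thesis by (induct A rule: infinite_finite_induct) (simp_all add: z h)
qed

lemma pair_id:
  fixes E :: "'v \<Rightarrow> 'v \<Rightarrow> complex"
  assumes E1a: "\<And>x x' y. E (x + x') y = E x y + E x' y" and E1s: "\<And>c x y. E (sm c x) y = c * E x y"
    and E2a: "\<And>x y y'. E x (y + y') = E x y + E x y'" and E2s: "\<And>c x y. E x (sm c y) = c * E x y"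
  shows "(\<Sum>b\<in>basis (Suc K). E (Y om 2 (dual b)) b + E (dual b) (Y om 2 b))
       = (\<Sum>c\<in>basis K. E (dual c) (Y om 0 c) + E (Y om 0 (dual c)) c)"
proof -
  have s1: "E (sum g A) y = (\<Sum>a\<in>A. E (g a) y)" for g A y
    by (rule addsum) (rule E1a)
  have s2: "E x (sum g A) = (\<Sum>a\<in>A. E x (g a))" for g A x
    by (rule addsum) (rule E2a)
  have A: "(\<Sum>b\<in>basis (Suc K). E (Y om 2 (dual b)) b) = (\<Sum>c\<in>basis K. E (dual c) (Y om 0 c))"
  proof -
    have "(\<Sum>b\<in>basis (Suc K). E (Y om 2 (dual b)) b)
        = (\<Sum>b\<in>basis (Suc K). E (\<Sum>c\<in>basis K. sm (B (Y om 2 (dual b)) c) (dual c)) b)"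
    proof (rule sum.cong[OF refl])
      fix b assume b: "b \<in> basis (Suc K)"
      have "Y om 2 (dual b) \<in> W K" using L1_wt dualp[OF b b] by blast
      then show "E (Y om 2 (dual b)) b = E (\<Sum>c\<in>basis K. sm (B (Y om 2 (dual b)) c) (dual c)) b"
        using dual_exp by metis
    qed
    also have "\<dots> = (\<Sum>b\<in>basis (Suc K). \<Sum>c\<in>basis K. B (dual b) (Y om 0 c) * E (dual c) b)"
      by (simp add: s1 E1s B_L1)
    also have "\<dots> = (\<Sum>c\<in>basis K. \<Sum>b\<in>basis (Suc K). B (dual b) (Y om 0 c) * E (dual c) b)"
      by (rule sum.swap)
    also have "\<dots> = (\<Sum>c\<in>basis K. E (dual c) (\<Sum>b\<in>basis (Suc K). sm (B (dual b) (Y om 0 c)) b))"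
      by (simp add: s2 E2s)
    also have "\<dots> = (\<Sum>c\<in>basis K. E (dual c) (Y om 0 c))"
    proof (rule sum.cong[OF refl])
      fix c assume c: "c \<in> basis K"
      have "Y om 0 c \<in> W (Suc K)" using Lm1_wt bas[of K] c by blast
      then show "E (dual c) (\<Sum>b\<in>basis (Suc K). sm (B (dual b) (Y om 0 c)) b) = E (dual c) (Y om 0 c)"
        using basis_exp by metis
    qed
    finally show ?thesis .
  qed
  have Bp: "(\<Sum>b\<in>basis (Suc K). E (dual b) (Y om 2 b)) = (\<Sum>c\<in>basis K. E (Y om 0 (dual c)) c)"
  proof -
    have "(\<Sum>b\<in>basis (Suc K). E (dual b) (Y om 2 b))
        = (\<Sum>b\<in>basis (Suc K). E (dual b) (\<Sum>c\<in>basis K. sm (B (dual c) (Y om 2 b)) c))"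
    proof (rule sum.cong[OF refl])
      fix b assume b: "b \<in> basis (Suc K)"
      have "Y om 2 b \<in> W K" using L1_wt bas[of "Suc K"] b by blast
      then show "E (dual b) (Y om 2 b) = E (dual b) (\<Sum>c\<in>basis K. sm (B (dual c) (Y om 2 b)) c)"
        using basis_exp by metis
    qed
    also have "\<dots> = (\<Sum>b\<in>basis (Suc K). \<Sum>c\<in>basis K. B (Y om 0 (dual c)) b * E (dual b) c)"
      by (simp add: s2 E2s B_Lm1)
    also have "\<dots> = (\<Sum>c\<in>basis K. \<Sum>b\<in>basis (Suc K). B (Y om 0 (dual c)) b * E (dual b) c)"
      by (rule sum.swap)
    also have "\<dots> = (\<Sum>c\<in>basis K. E (\<Sum>b\<in>basis (Suc K). sm (B (Y om 0 (dual c)) b) (dual b)) c)"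
      by (simp add: s1 E1s)
    also have "\<dots> = (\<Sum>c\<in>basis K. E (Y om 0 (dual c)) c)"
    proof (rule sum.cong[OF refl])
      fix c assume c: "c \<in> basis K"
      have "Y om 0 (dual c) \<in> W (Suc K)" using Lm1_wt dualp[OF c c] by blast
      then show "E (\<Sum>b\<in>basis (Suc K). sm (B (Y om 0 (dual c)) b) (dual b)) c = E (Y om 0 (dual c)) c"
        using dual_exp by metis
    qed
    finally show ?thesis .
  qed
  show ?thesis using A Bp by (simp add: sum.distrib)
qed

lemma pair_zero:
  fixes E :: "'v \<Rightarrow> 'v \<Rightarrow> complex"
  assumes E1a: "\<And>x x' y. E (x + x') y = E x y + E x' y"
    and E2a: "\<And>x y y'. E x (y + y') = E x y + E x y'"
  shows "(\<Sum>b\<in>basis 0. E (Y om 2 (dual b)) b + E (dual b) (Y om 2 b)) = 0"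
proof -
  have z1: "E 0 y = 0" for y
  proof -
    have "E 0 y + E 0 y = E 0 y + 0" using E1a[of 0 0 y] by simp
    then show ?thesis by (simp only: add_left_cancel)
  qed
  have z2: "E x 0 = 0" for x
  proof -
    have "E x 0 + E x 0 = E x 0 + 0" using E2a[of x 0 0] by simp
    then show ?thesis by (simp only: add_left_cancel)
  qed
  show ?thesis
  proof (rule sum.neutral, rule ballI)
    fix b assume b: "b \<in> basis 0"
    have "Y om 2 (dual b) = 0" using L1_W0 dualp[OF b b] by blast
    moreover have "Y om 2 b = 0" using L1_W0 bas[of 0] b by blast
    ultimately show "E (Y om 2 (dual b)) b + E (dual b) (Y om 2 b) = 0" by (simp add: z1 z2)
  qed
qed

lemma act_add: "act Y js V M (x + y) = act Y js V M x + act Y js V M y"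
  by (induct js) (simp_all add: Yadd)
lemma act_scale: "act Y js V M (sm c x) = sm c (act Y js V M x)"
  by (induct js) (simp_all add: Yscale)
lemma act_zero[simp]: "act Y js V M 0 = 0"
  by (induct js) simp_all
lemma act_sum: "act Y js V M (sum g A) = (\<Sum>a\<in>A. act Y js V M (g a))"
  by (rule addsum) (rule act_add)

lemma act_slot_add: "distinct js \<Longrightarrow> j \<in> set js \<Longrightarrow>
   act Y js (V(j := u + u')) M x = act Y js (V(j := u)) M x + act Y js (V(j := u')) M x"
proof (induct js)
  case Nil then show ?case by simp
next
  case (Cons i js)
  show ?case
  proof (cases "i = j")
    case True
    then have "j \<notin> set js" using Cons by simp
    then have e: "act Y js (V(j := w)) M x = act Y js V M x" for w by (intro act_cong) auto
    show ?thesis using True by (simp only: act.simps fun_upd_same e) (simp add: Y1add)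
  next
    case False
    then show ?thesis using Cons by (simp add: Yadd)
  qed
qed

lemma act_slot_scale: "distinct js \<Longrightarrow> j \<in> set js \<Longrightarrow>
   act Y js (V(j := sm c u)) M x = sm c (act Y js (V(j := u)) M x)"
proof (induct js)
  case Nil then show ?case by simp
next
  case (Cons i js)
  show ?case
  proof (cases "i = j")
    case True
    then have "j \<notin> set js" using Cons by simp
    then have e: "act Y js (V(j := w)) M x = act Y js V M x" for w by (intro act_cong) auto
    show ?thesis using True by (simp only: act.simps fun_upd_same e) (simp add: Y1scale)
  next
    case False
    then show ?thesis using Cons by (simp add: Yscale)
  qed
qed

lemma act_slot_Lm1: "distinct js \<Longrightarrow> j \<in> set js \<Longrightarrow>
   act Y js (V(j := Y om 0 u)) M x = sm (- of_int (M j)) (act Y js (V(j := u)) (M(j := M j - 1)) x)"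
proof (induct js)
  case Nil then show ?case by simp
next
  case (Cons i js)
  show ?case
  proof (cases "i = j")
    case True
    then have "j \<notin> set js" using Cons by simp
    then have e: "act Y js (V(j := w)) (M(j := m')) x = act Y js V M x" for w m' by (intro act_cong) auto
    have e2: "act Y js (V(j := w)) M x = act Y js V M x" for w
      using \<open>j \<notin> set js\<close> by (intro act_cong) auto
    show ?thesis using True der[of u "M j" "act Y js V M x"]
      by (simp only: act.simps fun_upd_same e e2) (simp add: Lv_def)
  next
    case False
    then show ?thesis using Cons by (simp add: Yscale Yneg)
  qed
qed

lemma tele:
  assumes "distinct js"
    and comm: "\<And>j y. j \<in> set js \<Longrightarrow> Y om p (Y (V j) (M j) y)
         = Y (V j) (M j) (Y om p y) + (\<Sum>t\<in>T. sm (c t j) (Y (V' t j) (M' t j) y))"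
  shows "Y om p (act Y js V M x) = act Y js V M (Y om p x)
     + (\<Sum>j\<in>set js. \<Sum>t\<in>T. sm (c t j) (act Y js (V(j := V' t j)) (M(j := M' t j)) x))"
  using assms
proof (induct js)
  case Nil then show ?case by simp
next
  case (Cons i js)
  have i: "i \<notin> set js" and d: "distinct js" using Cons.prems by auto
  have IH: "Y om p (act Y js V M x) = act Y js V M (Y om p x)
     + (\<Sum>j\<in>set js. \<Sum>t\<in>T. sm (c t j) (act Y js (V(j := V' t j)) (M(j := M' t j)) x))"
    by (rule Cons.hyps) (use Cons.prems in auto)
  have e: "act Y js (V(i := w)) (M(i := m')) x = act Y js V M x" for w m'
    using i by (intro act_cong) auto
  have e2: "act Y (i # js) (V(j := w)) (M(j := m')) x = Y (V i) (M i) (act Y js (V(j := w)) (M(j := m')) x)"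
    if "j \<in> set js" for j w m' using that i by auto
  have "Y om p (act Y (i # js) V M x) = Y (V i) (M i) (Y om p (act Y js V M x))
      + (\<Sum>t\<in>T. sm (c t i) (Y (V' t i) (M' t i) (act Y js V M x)))"
    using Cons.prems(2)[of i "act Y js V M x"] by simp
  also have "\<dots> = act Y (i # js) V M (Y om p x)
      + (\<Sum>j\<in>set js. \<Sum>t\<in>T. sm (c t j) (act Y (i # js) (V(j := V' t j)) (M(j := M' t j)) x))
      + (\<Sum>t\<in>T. sm (c t i) (act Y (i # js) (V(i := V' t i)) (M(i := M' t i)) x))"
  proof -
    have a: "Y (V i) (M i) (\<Sum>j\<in>set js. \<Sum>t\<in>T. sm (c t j) (act Y js (V(j := V' t j)) (M(j := M' t j)) x))
      = (\<Sum>j\<in>set js. \<Sum>t\<in>T. sm (c t j) (act Y (i # js) (V(j := V' t j)) (M(j := M' t j)) x))"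
      unfolding Ysum Yscale
    proof (intro sum.cong refl)
      fix j t assume "j \<in> set js"
      then show "sm (c t j) (Y (V i) (M i) (act Y js (V(j := V' t j)) (M(j := M' t j)) x))
         = sm (c t j) (act Y (i # js) (V(j := V' t j)) (M(j := M' t j)) x)"
        using e2 by metis
    qed
    have b: "(\<Sum>t\<in>T. sm (c t i) (Y (V' t i) (M' t i) (act Y js V M x)))
      = (\<Sum>t\<in>T. sm (c t i) (act Y (i # js) (V(i := V' t i)) (M(i := M' t i)) x))"
    proof (intro sum.cong refl)
      fix t
      show "sm (c t i) (Y (V' t i) (M' t i) (act Y js V M x)) =
         sm (c t i) (act Y (i # js) (V(i := V' t i)) (M(i := M' t i)) x)"
        by (simp only: act.simps fun_upd_same e)
    qed
    show ?thesis unfolding IH Yadd a b by simp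
  qed
  also have "\<dots> = act Y (i # js) V M (Y om p x)
     + (\<Sum>j\<in>set (i # js). \<Sum>t\<in>T. sm (c t j) (act Y (i # js) (V(j := V' t j)) (M(j := M' t j)) x))"
    using i by (simp add: add_ac)
  finally show ?case .
qed

lemma ward_m1:
  assumes d: "distinct js"
  shows "(\<Sum>j\<in>set js. (- of_int (M j)) * B vac (act Y js V (M(j := M j - 1)) vac)) = 0"
proof -
  have "Y om 0 (act Y js V M vac) = act Y js V M (Y om 0 vac)
     + (\<Sum>j\<in>set js. \<Sum>t\<in>{()}. sm ((\<lambda>t j. - of_int (M j)) t j)
          (act Y js (V(j := (\<lambda>t j. V j) t j)) (M(j := (\<lambda>t j. M j - 1) t j)) vac))"
    by (rule tele[OF d]) (use comm_Lm1 in \<open>simp add: algebra_simps\<close>)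
  then have "B vac (Y om 0 (act Y js V M vac))
     = B vac (\<Sum>j\<in>set js. sm (- of_int (M j)) (act Y js V (M(j := M j - 1)) vac))"
    using vac_modes by simp
  then show ?thesis using Bvac_O by (simp add: Bsum Bscale Bneg)
qed

lemma ward_0:
  assumes d: "distinct js" and w: "\<And>j. j \<in> set js \<Longrightarrow> V j \<in> W (wt j)"
  shows "(\<Sum>j\<in>set js. of_nat (wt j) - of_int (M j) - 1) * B vac (act Y js V M vac) = 0"
proof -
  have "Y om 1 (act Y js V M vac) = act Y js V M (Y om 1 vac)
     + (\<Sum>j\<in>set js. \<Sum>t\<in>{()}. sm ((\<lambda>t j. of_nat (wt j) - of_int (M j) - 1) t j)
          (act Y js (V(j := (\<lambda>t j. V j) t j)) (M(j := (\<lambda>t j. M j) t j)) vac))"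
  proof (rule tele[OF d])
    fix j y assume "j \<in> set js"
    from comm_L0[OF w[OF this], of "M j" y]
    show "Y om 1 (Y (V j) (M j) y) = Y (V j) (M j) (Y om 1 y) +
        (\<Sum>t\<in>{()}. sm ((\<lambda>t j. of_nat (wt j) - of_int (M j) - 1) t j) (Y ((\<lambda>t j. V j) t j) ((\<lambda>t j. M j) t j) y))"
      by (simp add: algebra_simps)
  qed
  then have "B vac (Y om 1 (act Y js V M vac))
     = B vac (\<Sum>j\<in>set js. sm (of_nat (wt j) - of_int (M j) - 1) (act Y js V M vac))"
    using vac_modes by simp
  then show ?thesis using Bvac_O by (simp add: Bsum Bscale sum_distrib_right)
qed

lemma ward_1:
  assumes d: "distinct js" and w: "\<And>j. j \<in> set js \<Longrightarrow> V j \<in> W (wt j)"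
  shows "(\<Sum>j\<in>set js. (2 * of_nat (wt j) - of_int (M j) - 2) * B vac (act Y js V (M(j := M j + 1)) vac)
       + B vac (act Y js (V(j := Y om 2 (V j))) M vac)) = 0"
proof -
  have "Y om 2 (act Y js V M vac) = act Y js V M (Y om 2 vac)
     + (\<Sum>j\<in>set js. \<Sum>t\<in>UNIV. sm ((\<lambda>t j. if t then 2 * of_nat (wt j) - of_int (M j) - 2 else 1) t j)
          (act Y js (V(j := (\<lambda>t j. if t then V j else Y om 2 (V j)) t j))
                    (M(j := (\<lambda>t j. if t then M j + 1 else M j) t j)) vac))"
  proof (rule tele[OF d])
    fix j y assume "j \<in> set js"
    from comm_L1[OF w[OF this], of "M j" y]
    show "Y om 2 (Y (V j) (M j) y) = Y (V j) (M j) (Y om 2 y) +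
        (\<Sum>t\<in>UNIV. sm ((\<lambda>t j. if t then 2 * of_nat (wt j) - of_int (M j) - 2 else 1) t j)
           (Y ((\<lambda>t j. if t then V j else Y om 2 (V j)) t j) ((\<lambda>t j. if t then M j + 1 else M j) t j) y))"
      by (simp add: UNIV_bool algebra_simps)
  qed
  then have "B vac (Y om 2 (act Y js V M vac))
     = B vac (\<Sum>j\<in>set js. sm (2 * of_nat (wt j) - of_int (M j) - 2) (act Y js V (M(j := M j + 1)) vac)
          + act Y js (V(j := Y om 2 (V j))) M vac)"
    using vac_modes by (simp add: UNIV_bool add_ac)
  then show ?thesis using Bvac_O by (simp add: Bsum Bscale Badd)
qed

lemma Vb_W: "\<beta> \<in> Pi\<^sub>E {1..g} (\<lambda>a. basis (k a)) \<Longrightarrow> j \<in> Iset g \<Longrightarrow> Vb dual \<beta> j \<in> W (k (nat \<bar>j\<bar>))"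
proof -
  assume b: "\<beta> \<in> Pi\<^sub>E {1..g} (\<lambda>a. basis (k a))" and j: "j \<in> Iset g"
  have i: "nat \<bar>j\<bar> \<in> {1..g}" using j by (auto simp: Iset_def)
  then have bi: "\<beta> (nat \<bar>j\<bar>) \<in> basis (k (nat \<bar>j\<bar>))" using b by auto
  show ?thesis
  proof (cases "j < 0")
    case True
    then show ?thesis using dualp[OF bi bi] by (simp add: Vb_def)
  next
    case False
    then show ?thesis using bi bas[of "k (nat \<bar>j\<bar>)"] by (auto simp: Vb_def)
  qed
qed

theorem Lm1_thm: "L_m1 g (genus_Z Y vac B basis dual g) k m = 0"
proof (cases "supp g k m")
  case False
  then show ?thesis unfolding L_m1_def by (simp add: genus_ns supp_m)
next
  case True
  let ?S = "Pi\<^sub>E {1..g} (\<lambda>a. basis (k a))"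
  have "(\<Sum>a\<in>Iset g. of_int (m a + 1) * genus_Z Y vac B basis dual g k (m(a := m a + 1)))
      = (\<Sum>a\<in>Iset g. \<Sum>\<beta>\<in>?S. (- of_int (Mm m a)) * B vac (act Y (jsl g) (Vb dual \<beta>) ((Mm m)(a := Mm m a - 1)) vac))"
    by (intro sum.cong refl) (simp add: genus_eq supp_m True Mm_upd sum_distrib_left Mm_def add.commute)
  also have "\<dots> = (\<Sum>\<beta>\<in>?S. \<Sum>a\<in>set (jsl g). (- of_int (Mm m a)) * B vac (act Y (jsl g) (Vb dual \<beta>) ((Mm m)(a := Mm m a - 1)) vac))"
    by (simp add: set_jsl sum.swap[of _ "Iset g"])
  also have "\<dots> = 0" by (rule sum.neutral, rule ballI, rule ward_m1[OF distinct_jsl])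
  finally show ?thesis unfolding L_m1_def by simp
qed

theorem L0_thm: "L_0 g (genus_Z Y vac B basis dual g) k m = 0"
proof (cases "supp g k m")
  case False
  then show ?thesis unfolding L_0_def by (simp add: genus_ns)
next
  case True
  let ?S = "Pi\<^sub>E {1..g} (\<lambda>a. basis (k a))"
  let ?wt = "\<lambda>j. k (nat \<bar>j\<bar>)"
  have w: "(\<Sum>j\<in>set (jsl g). of_nat (?wt j) - of_int (Mm m j) - 1)
      = (\<Sum>a\<in>Iset g. (of_int (m a) :: complex)) + 2 * (\<Sum>a\<in>{1..g}. of_nat (k a))"
    by (simp add: set_jsl sum_Iset Mm_def sum.distrib sum_distrib_left algebra_simps)
  have z: "(\<Sum>j\<in>set (jsl g). of_nat (?wt j) - of_int (Mm m j) - 1) * B vac (act Y (jsl g) (Vb dual \<beta>) (Mm m) vac) = 0"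
    if "\<beta> \<in> ?S" for \<beta>
    by (rule ward_0[OF distinct_jsl]) (use Vb_W[OF that] in \<open>auto simp: set_jsl\<close>)
  let ?G = "genus_Z Y vac B basis dual g k m"
  let ?c = "(\<Sum>j\<in>set (jsl g). of_nat (?wt j) - of_int (Mm m j) - 1) :: complex"
  have "L_0 g (genus_Z Y vac B basis dual g) k m
     = - ((\<Sum>a\<in>Iset g. of_int (m a)) * ?G) - 2 * ((\<Sum>a\<in>{1..g}. of_nat (k a)) * ?G)"
    unfolding L_0_def by (simp only: sum_distrib_right)
  also have "\<dots> = - (?c * ?G)" unfolding w by (simp add: algebra_simps)
  also have "\<dots> = - (\<Sum>\<beta>\<in>?S. ?c * B vac (act Y (jsl g) (Vb dual \<beta>) (Mm m) vac))"
    by (simp only: genus_eq[OF True] sum_distrib_left)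
  also have "\<dots> = 0" by (simp add: z)
  finally show ?thesis .
qed

definition Cr :: "nat \<Rightarrow> (int \<Rightarrow> 'v) \<Rightarrow> (int \<Rightarrow> int) \<Rightarrow> complex" where
  "Cr g V M = B vac (act Y (jsl g) V M vac)"

lemma Vb_upd: "1 \<le> a \<Longrightarrow> Vb dual (\<beta>(a := x)) = (Vb dual \<beta>)(- int a := dual x, int a := x)"
  by (rule ext) (auto simp: Vb_def)

lemma pm_in: "a \<in> {1..g} \<Longrightarrow> int a \<in> set (jsl g) \<and> - int a \<in> set (jsl g)"
  by (auto simp: set_jsl Iset_def)

lemma pairL1:
  assumes a: "a \<in> {1..g}" and sp: "supp g k m"
  shows "(\<Sum>\<beta>\<in>Pi\<^sub>E {1..g} (\<lambda>i. basis (k i)).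
            Cr g ((Vb dual \<beta>)(int a := Y om 2 (Vb dual \<beta> (int a)))) (Mm m)
          + Cr g ((Vb dual \<beta>)(- int a := Y om 2 (Vb dual \<beta> (- int a)))) (Mm m))
    = (if 1 \<le> k a then
         (of_int (m (int a)) + 1) * genus_Z Y vac B basis dual g (k(a := k a - 1)) (m(int a := m (int a) + 1))
       + (of_int (m (- int a)) + 1) * genus_Z Y vac B basis dual g (k(a := k a - 1)) (m(- int a := m (- int a) + 1))
       else 0)"
proof -
  define J where "J = {1..g} - {a}"
  have I: "{1..g} = insert a J" and aJ: "a \<notin> J" using a by (auto simp: J_def)
  have a1: "1 \<le> a" using a by simp
  have ne: "- int a \<noteq> int a" using a1 by simp
  have jp: "int a \<in> set (jsl g)" and jm: "- int a \<in> set (jsl g)" using pm_in[OF a] by auto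
  have dj: "distinct (jsl g)" by (rule distinct_jsl)
  let ?PJ = "Pi\<^sub>E J (\<lambda>i. basis (k i))"
  define E where "E \<beta> p q = Cr g ((Vb dual \<beta>)(- int a := p, int a := q)) (Mm m)" for \<beta> p q
  have tw: "V(- int a := p, int a := q) = (V(int a := q))(- int a := p)" for V :: "int \<Rightarrow> 'v" and p q
    using ne by (rule fun_upd_twist)
  have E1a: "E \<beta> (x + x') y = E \<beta> x y + E \<beta> x' y" for \<beta> x x' y
    unfolding E_def Cr_def tw act_slot_add[OF dj jm] Badd ..
  have E1s: "E \<beta> (sm c x) y = c * E \<beta> x y" for \<beta> c x y
    unfolding E_def Cr_def tw act_slot_scale[OF dj jm] Bscale ..
  have E2a: "E \<beta> x (y + y') = E \<beta> x y + E \<beta> x y'" for \<beta> x y y'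
    unfolding E_def Cr_def act_slot_add[OF dj jp] Badd ..
  have E2s: "E \<beta> x (sm c y) = c * E \<beta> x y" for \<beta> c x y
    unfolding E_def Cr_def act_slot_scale[OF dj jp] Bscale ..
  have LHS: "(\<Sum>\<beta>\<in>Pi\<^sub>E {1..g} (\<lambda>i. basis (k i)).
            Cr g ((Vb dual \<beta>)(int a := Y om 2 (Vb dual \<beta> (int a)))) (Mm m)
          + Cr g ((Vb dual \<beta>)(- int a := Y om 2 (Vb dual \<beta> (- int a)))) (Mm m))
      = (\<Sum>\<beta>\<in>?PJ. \<Sum>x\<in>basis (k a). E \<beta> (Y om 2 (dual x)) x + E \<beta> (dual x) (Y om 2 x))"
  proof -
    have "(\<Sum>\<beta>\<in>Pi\<^sub>E {1..g} (\<lambda>i. basis (k i)).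
            Cr g ((Vb dual \<beta>)(int a := Y om 2 (Vb dual \<beta> (int a)))) (Mm m)
          + Cr g ((Vb dual \<beta>)(- int a := Y om 2 (Vb dual \<beta> (- int a)))) (Mm m))
        = (\<Sum>x\<in>basis (k a). \<Sum>\<beta>\<in>?PJ.
            Cr g ((Vb dual (\<beta>(a:=x)))(int a := Y om 2 (Vb dual (\<beta>(a:=x)) (int a)))) (Mm m)
          + Cr g ((Vb dual (\<beta>(a:=x)))(- int a := Y om 2 (Vb dual (\<beta>(a:=x)) (- int a)))) (Mm m))"
      unfolding I by (rule sum_PiE_split[OF aJ])
    also have "\<dots> = (\<Sum>x\<in>basis (k a). \<Sum>\<beta>\<in>?PJ. E \<beta> (Y om 2 (dual x)) x + E \<beta> (dual x) (Y om 2 x))"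
    proof (intro sum.cong refl)
      fix x \<beta>
      have e1: "(Vb dual (\<beta>(a:=x)))(int a := Y om 2 (Vb dual (\<beta>(a:=x)) (int a)))
          = (Vb dual \<beta>)(- int a := dual x, int a := Y om 2 x)"
        unfolding Vb_upd[OF a1] by simp
      have e2: "(Vb dual (\<beta>(a:=x)))(- int a := Y om 2 (Vb dual (\<beta>(a:=x)) (- int a)))
          = (Vb dual \<beta>)(- int a := Y om 2 (dual x), int a := x)"
        unfolding Vb_upd[OF a1] using ne by (auto simp: fun_eq_iff)
      show "Cr g ((Vb dual (\<beta>(a:=x)))(int a := Y om 2 (Vb dual (\<beta>(a:=x)) (int a)))) (Mm m)
          + Cr g ((Vb dual (\<beta>(a:=x)))(- int a := Y om 2 (Vb dual (\<beta>(a:=x)) (- int a)))) (Mm m)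
          = E \<beta> (Y om 2 (dual x)) x + E \<beta> (dual x) (Y om 2 x)"
        unfolding e1 e2 E_def by simp
    qed
    also have "\<dots> = (\<Sum>\<beta>\<in>?PJ. \<Sum>x\<in>basis (k a). E \<beta> (Y om 2 (dual x)) x + E \<beta> (dual x) (Y om 2 x))"
      by (rule sum.swap)
    finally show ?thesis .
  qed
  show ?thesis
  proof (cases "k a")
    case 0
    have "(\<Sum>x\<in>basis (k a). E \<beta> (Y om 2 (dual x)) x + E \<beta> (dual x) (Y om 2 x)) = 0" for \<beta>
      unfolding 0 by (rule pair_zero) (rule E1a, rule E2a)
    then show ?thesis unfolding LHS using 0 by simp
  next
    case (Suc K)
    define k' where "k' = k(a := K)"
    have k'a: "k(a := k a - 1) = k'" unfolding k'_def Suc by simp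
    have PJ': "Pi\<^sub>E J (\<lambda>i. basis (k' i)) = ?PJ"
      by (rule PiE_cong) (use aJ in \<open>auto simp: k'_def\<close>)
    have spp: "supp g k' (m(j := x))" if "j \<in> Iset g" for j x
      using sp that a unfolding k'_def by (simp add: supp_m supp_k)
    have Ga: "genus_Z Y vac B basis dual g k' (m(j := m j + 1))
        = (\<Sum>c\<in>basis K. \<Sum>\<beta>\<in>?PJ. Cr g (Vb dual (\<beta>(a := c))) ((Mm m)(j := Mm m j - 1)))"
      if "j \<in> Iset g" for j
    proof -
      have "genus_Z Y vac B basis dual g k' (m(j := m j + 1))
          = (\<Sum>\<beta>\<in>Pi\<^sub>E (insert a J) (\<lambda>i. basis (k' i)). Cr g (Vb dual \<beta>) ((Mm m)(j := Mm m j - 1)))"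
        unfolding genus_eq[OF spp[OF that]] I Cr_def Mm_upd by (simp add: Mm_def)
      also have "\<dots> = (\<Sum>c\<in>basis (k' a). \<Sum>\<beta>\<in>Pi\<^sub>E J (\<lambda>i. basis (k' i)). Cr g (Vb dual (\<beta>(a := c))) ((Mm m)(j := Mm m j - 1)))"
        by (rule sum_PiE_split[OF aJ])
      finally show ?thesis unfolding PJ' by (simp add: k'_def)
    qed
    have ipos: "int a \<in> Iset g" and ineg: "- int a \<in> Iset g" using jp jm by (auto simp: set_jsl)
    have F1: "E \<beta> (dual c) (Y om 0 c) = (of_int (m (int a)) + 1) * Cr g (Vb dual (\<beta>(a := c))) ((Mm m)(int a := Mm m (int a) - 1))"
      for \<beta> c
    proof -
      have "E \<beta> (dual c) (Y om 0 c) = B vac (sm (- of_int (Mm m (int a)))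
          (act Y (jsl g) ((Vb dual \<beta>)(- int a := dual c, int a := c)) ((Mm m)(int a := Mm m (int a) - 1)) vac))"
        unfolding E_def Cr_def act_slot_Lm1[OF dj jp] ..
      then show ?thesis unfolding Vb_upd[OF a1] Bscale Cr_def by (simp add: Mm_def)
    qed
    have F2: "E \<beta> (Y om 0 (dual c)) c = (of_int (m (- int a)) + 1) * Cr g (Vb dual (\<beta>(a := c))) ((Mm m)(- int a := Mm m (- int a) - 1))"
      for \<beta> c
    proof -
      have "E \<beta> (Y om 0 (dual c)) c = B vac (sm (- of_int (Mm m (- int a)))
          (act Y (jsl g) (((Vb dual \<beta>)(int a := c))(- int a := dual c)) ((Mm m)(- int a := Mm m (- int a) - 1)) vac))"
        unfolding E_def Cr_def tw act_slot_Lm1[OF dj jm] ..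
      then show ?thesis unfolding Vb_upd[OF a1] Bscale Cr_def tw[symmetric] by (simp add: Mm_def)
    qed
    have "(\<Sum>\<beta>\<in>?PJ. \<Sum>x\<in>basis (k a). E \<beta> (Y om 2 (dual x)) x + E \<beta> (dual x) (Y om 2 x))
        = (\<Sum>\<beta>\<in>?PJ. \<Sum>c\<in>basis K. E \<beta> (dual c) (Y om 0 c) + E \<beta> (Y om 0 (dual c)) c)"
      unfolding Suc by (intro sum.cong refl pair_id E1a E1s E2a E2s)
    also have "\<dots> = (\<Sum>c\<in>basis K. \<Sum>\<beta>\<in>?PJ.
          (of_int (m (int a)) + 1) * Cr g (Vb dual (\<beta>(a := c))) ((Mm m)(int a := Mm m (int a) - 1))
        + (of_int (m (- int a)) + 1) * Cr g (Vb dual (\<beta>(a := c))) ((Mm m)(- int a := Mm m (- int a) - 1)))"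
      unfolding F1 F2 by (rule sum.swap)
    also have "\<dots> = (of_int (m (int a)) + 1) * genus_Z Y vac B basis dual g k' (m(int a := m (int a) + 1))
       + (of_int (m (- int a)) + 1) * genus_Z Y vac B basis dual g k' (m(- int a := m (- int a) + 1))"
      unfolding Ga[OF ipos] Ga[OF ineg] by (simp add: sum.distrib sum_distrib_left)
    finally show ?thesis unfolding LHS k'a using Suc by simp
  qed
qed

theorem L1_thm: "L_1 g (genus_Z Y vac B basis dual g) k m = 0"
proof (cases "supp g k m")
  case False
  have z: "genus_Z Y vac B basis dual g (k(nat \<bar>a\<bar> := y)) (m(a := x)) = 0" if "a \<in> Iset g" for a x y
    by (rule genus_ns) (simp add: supp_m[OF that] supp_kI[OF that] False)
  have z2: "(\<Sum>a\<in>Iset g. if Suc 0 \<le> k (nat \<bar>a\<bar>)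
        then complex_of_int (m a + 1) * genus_Z Y vac B basis dual g (k(nat \<bar>a\<bar> := k (nat \<bar>a\<bar>) - 1)) (m(a := m a + 1))
        else 0) = 0"
    by (intro sum.neutral ballI) (simp add: z)
  show ?thesis unfolding L_1_def by (simp add: z2 genus_ns supp_m supp_mp supp_mn False)
next
  case True
  let ?S = "Pi\<^sub>E {1..g} (\<lambda>a. basis (k a))"
  let ?G = "genus_Z Y vac B basis dual g"
  define CL where "CL \<beta> j = Cr g ((Vb dual \<beta>)(j := Y om 2 (Vb dual \<beta> j))) (Mm m)" for \<beta> j
  define T where "T j = of_int (m j - 1) * ?G k (m(j := m j - 1))
        + (if 1 \<le> k (nat \<bar>j\<bar>)
           then of_int (m j + 1) * ?G (k(nat \<bar>j\<bar> := k (nat \<bar>j\<bar>) - 1)) (m(j := m j + 1))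
           else 0)" for j
  define U where "U j = (2 * of_nat (k (nat \<bar>j\<bar>)) + of_int (m j) - 1) * ?G k (m(j := m j - 1))
        + (\<Sum>\<beta>\<in>?S. CL \<beta> j)" for j
  have A: "(\<Sum>j\<in>Iset g. U j) = 0"
  proof -
    have w1: "(\<Sum>j\<in>set (jsl g). (2 * of_nat (k (nat \<bar>j\<bar>)) - of_int (Mm m j) - 2)
         * B vac (act Y (jsl g) (Vb dual \<beta>) ((Mm m)(j := Mm m j + 1)) vac)
       + B vac (act Y (jsl g) ((Vb dual \<beta>)(j := Y om 2 (Vb dual \<beta> j))) (Mm m) vac)) = 0"
      if "\<beta> \<in> ?S" for \<beta>
      by (rule ward_1[OF distinct_jsl]) (use Vb_W[OF that] in \<open>auto simp: set_jsl\<close>)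
    have "(\<Sum>j\<in>Iset g. U j) = (\<Sum>j\<in>Iset g. \<Sum>\<beta>\<in>?S. (2 * of_nat (k (nat \<bar>j\<bar>)) - of_int (Mm m j) - 2)
         * B vac (act Y (jsl g) (Vb dual \<beta>) ((Mm m)(j := Mm m j + 1)) vac)
       + B vac (act Y (jsl g) ((Vb dual \<beta>)(j := Y om 2 (Vb dual \<beta> j))) (Mm m) vac))"
    proof (intro sum.cong refl)
      fix j assume j: "j \<in> Iset g"
      have "?G k (m(j := m j - 1)) = (\<Sum>\<beta>\<in>?S. B vac (act Y (jsl g) (Vb dual \<beta>) ((Mm m)(j := Mm m j + 1)) vac))"
        unfolding genus_eq[OF supp_m[OF j, THEN iffD2, OF True]] Mm_upd by (simp add: Mm_def)
      then show "U j = (\<Sum>\<beta>\<in>?S. (2 * of_nat (k (nat \<bar>j\<bar>)) - of_int (Mm m j) - 2)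
         * B vac (act Y (jsl g) (Vb dual \<beta>) ((Mm m)(j := Mm m j + 1)) vac)
       + B vac (act Y (jsl g) ((Vb dual \<beta>)(j := Y om 2 (Vb dual \<beta> j))) (Mm m) vac))"
      proof -
        assume h: "?G k (m(j := m j - 1)) = (\<Sum>\<beta>\<in>?S. B vac (act Y (jsl g) (Vb dual \<beta>) ((Mm m)(j := Mm m j + 1)) vac))"
        have "U j = (\<Sum>\<beta>\<in>?S. (2 * of_nat (k (nat \<bar>j\<bar>)) + of_int (m j) - 1) * B vac (act Y (jsl g) (Vb dual \<beta>) ((Mm m)(j := Mm m j + 1)) vac) + CL \<beta> j)"
          unfolding U_def h by (simp only: sum.distrib sum_distrib_left)
        also have "\<dots> = (\<Sum>\<beta>\<in>?S. (2 * of_nat (k (nat \<bar>j\<bar>)) - of_int (Mm m j) - 2)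
         * B vac (act Y (jsl g) (Vb dual \<beta>) ((Mm m)(j := Mm m j + 1)) vac)
       + B vac (act Y (jsl g) ((Vb dual \<beta>)(j := Y om 2 (Vb dual \<beta> j))) (Mm m) vac))"
          by (intro sum.cong refl) (simp add: CL_def Cr_def Mm_def algebra_simps)
        finally show ?thesis .
      qed
    qed
    also have "\<dots> = (\<Sum>\<beta>\<in>?S. \<Sum>j\<in>set (jsl g). (2 * of_nat (k (nat \<bar>j\<bar>)) - of_int (Mm m j) - 2)
         * B vac (act Y (jsl g) (Vb dual \<beta>) ((Mm m)(j := Mm m j + 1)) vac)
       + B vac (act Y (jsl g) ((Vb dual \<beta>)(j := Y om 2 (Vb dual \<beta> j))) (Mm m) vac))"
      unfolding set_jsl by (rule sum.swap)
    also have "\<dots> = 0" by (rule sum.neutral, rule ballI, rule w1)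
    finally show ?thesis .
  qed
  have key: "T (int a) + T (- int a) + 2 * (of_nat (k a) * (?G k (m(int a := m (int a) - 1)) + ?G k (m(- int a := m (- int a) - 1))))
      = U (int a) + U (- int a)" if a: "a \<in> {1..g}" for a
  proof -
    have p: "(\<Sum>\<beta>\<in>?S. CL \<beta> (int a)) + (\<Sum>\<beta>\<in>?S. CL \<beta> (- int a))
      = (if 1 \<le> k a then
         (of_int (m (int a)) + 1) * ?G (k(a := k a - 1)) (m(int a := m (int a) + 1))
       + (of_int (m (- int a)) + 1) * ?G (k(a := k a - 1)) (m(- int a := m (- int a) + 1))
       else 0)"
      unfolding CL_def sum.distrib[symmetric] by (rule pairL1[OF a True])
    have na: "nat \<bar>int a\<bar> = a" "nat \<bar>- int a\<bar> = a" by simp_all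
    show ?thesis unfolding T_def U_def na using p by (simp add: algebra_simps)
  qed
  have "L_1 g ?G k m = - (\<Sum>j\<in>Iset g. T j)
     - 2 * (\<Sum>a\<in>{1..g}. of_nat (k a) * (?G k (m(int a := m (int a) - 1)) + ?G k (m(- int a := m (- int a) - 1))))"
    unfolding L_1_def T_def by simp
  also have "\<dots> = - (\<Sum>a\<in>{1..g}. T (int a) + T (- int a)
      + 2 * (of_nat (k a) * (?G k (m(int a := m (int a) - 1)) + ?G k (m(- int a := m (- int a) - 1)))))"
    unfolding sum_Iset by (simp add: sum.distrib sum_distrib_left)
  also have "\<dots> = - (\<Sum>a\<in>{1..g}. U (int a) + U (- int a))"
    by (simp add: key)
  also have "\<dots> = 0" using A unfolding sum_Iset by simp
  finally show ?thesis .
qed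

end

theorem mainTheorem6:
  fixes sm :: "complex \<Rightarrow> 'v::ab_group_add \<Rightarrow> 'v"
    and Y :: "'v \<Rightarrow> int \<Rightarrow> 'v \<Rightarrow> 'v"
    and vac om :: 'v
    and B :: "'v \<Rightarrow> 'v \<Rightarrow> complex"
    and basis :: "nat \<Rightarrow> 'v set"
    and dual :: "'v \<Rightarrow> 'v"
    and g :: nat
  assumes "is_VOA sm Y vac om"
    and "simple_VOA sm Y"
    and "self_dual sm Y om"
    and "strong_CFT_type sm Y vac om"
    and "invariant_form sm Y om B"
    and "B vac vac = 1"
    and "\<And>n. finite (basis n) \<and> basis n \<subseteq> wt_space sm Y om n
            \<and> \<not> module.dependent sm (basis n) \<and> module.span sm (basis n) = wt_space sm Y om n"
    and "\<And>n b b'. b \<in> basis n \<Longrightarrow> b' \<in> basis n \<Longrightarrow>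
            dual b \<in> wt_space sm Y om n \<and> B (dual b) b' = (if b = b' then 1 else 0)"
    and "1 \<le> g"
  shows "\<forall>k m. L_m1 g (genus_Z Y vac B basis dual g) k m = 0
             \<and> L_0 g (genus_Z Y vac B basis dual g) k m = 0
             \<and> L_1 g (genus_Z Y vac B basis dual g) k m = 0"
proof -
  have V: "is_VOA sm Y vac om" by fact
  have vs: "vector_space sm" using V by (simp add: is_VOA_def)
  have ax: "VC_axioms sm Y vac om B basis dual"
  proof (unfold VC_axioms_def, intro conjI)
    show "\<forall>u n. Vector_Spaces.linear sm sm (Y u n)" using V by (simp add: is_VOA_def)
    show "\<forall>n v. Vector_Spaces.linear sm sm (\<lambda>u. Y u n v)" using V by (simp add: is_VOA_def)
    show "\<forall>u n. 0 \<le> n \<longrightarrow> Y u n vac = 0" using V by (simp add: is_VOA_def)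
    show "\<forall>u. Y u (-1) vac = u" using V by (simp add: is_VOA_def)
    show "\<forall>u v w p q r. \<exists>N. \<forall>M\<ge>N.
        (\<Sum>i<M. sm ((of_int p :: complex) gchoose i) (Y (Y u (r + int i) v) (p + q - int i) w))
      = (\<Sum>i<M. sm ((-1) ^ i * ((of_int r :: complex) gchoose i))
            (Y u (p + r - int i) (Y v (q + int i) w)
             - sm (sign_int r) (Y v (q + r - int i) (Y u (p + int i) w))))"
      using V unfolding is_VOA_def by blast
    show "\<exists>c::complex. \<forall>m n v.
        Lv Y om m (Lv Y om n v) - Lv Y om n (Lv Y om m v)
      = sm (of_int (m - n)) (Lv Y om (m + n) v)
        + (if m + n = 0 then sm ((of_int m ^ 3 - of_int m) / 12 * c) v else 0)"
      using V unfolding is_VOA_def by blast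
    show "\<forall>u n v. Y (Lv Y om (-1) u) n v = sm (- of_int n) (Y u (n - 1) v)"
      using V unfolding is_VOA_def by blast
    show "\<forall>v. \<exists>f N. (\<forall>n. f n \<in> wt_space sm Y om n) \<and> v = (\<Sum>n<N. f n)"
      using V unfolding is_VOA_def by blast
    show "simple_VOA sm Y" by fact
    show "wt_space sm Y om 0 = module.span sm {vac}"
      using assms(4) unfolding strong_CFT_type_def by blast
    show "\<forall>u. Vector_Spaces.linear sm (*) (B u)" using assms(5) unfolding invariant_form_def by blast
    show "\<forall>w. Vector_Spaces.linear sm (*) (\<lambda>u. B u w)" using assms(5) unfolding invariant_form_def by blast
    show "\<forall>k u n v w. u \<in> wt_space sm Y om k \<longrightarrow>
        B (Y u n v) w = (-1) ^ k * (\<Sum>j\<le>k. (1 / fact j) *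
            B v (Y ((Lv Y om 1 ^^ j) u) (2 * int k - n - int j - 2) w))"
      using assms(5) unfolding invariant_form_def by blast
    show "B vac vac = 1" by fact
    show "\<forall>n. finite (basis n) \<and> basis n \<subseteq> wt_space sm Y om n \<and> module.span sm (basis n) = wt_space sm Y om n"
      using assms(7) by blast
    show "\<forall>n b b'. b \<in> basis n \<longrightarrow> b' \<in> basis n \<longrightarrow>
            dual b \<in> wt_space sm Y om n \<and> B (dual b) b' = (if b = b' then 1 else 0)"
      using assms(8) by blast
  qed
  interpret VC sm Y vac om B basis dual by (rule VC.intro[OF vs ax])
  show ?thesis using Lm1_thm L0_thm L1_thm by blast
qed

end
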